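(* Let $\Psi:\mathbb{R}^n\to\mathbb{R}$ be convex and twice continuously differentiable, let $s:\mathbb{R}^n\to\mathbb{R}^m$ ($m\ge n$) have continuously differentiable component functions with Jacobian $J(x)\in\mathbb{R}^{m\times n}$, let $b\in\mathbb{R}^m$, $\sigma>0$, and $c(x)=\frac12\|s(x)-b\|^2-\frac{\sigma^2}{2}$, so $\nabla c(x)=J(x)^T(s(x)-b)$. Let $x^*\in\mathbb{R}^n$ and $\rho>0$ be such that for every $x$ in the open ball $\mathcal{B}_\rho(x^* )$ there exists $(p,\lambda)\in\mathbb{R}^n\times\mathbb{R}$, $\lambda>0$, solving $$\nabla\Psi(x+p)+\lambda\big(\nabla c(x)+J(x)^TJ(x)p\big)=0,\qquad c(x)+\nabla c(x)^Tp+\tfrac12 p^TJ(x)^TJ(x)p=0. \quad ( * )$$ Then for every $x\in\mathcal{B}_\rho(x^* )$, with $(p,\lambda)$ a solution of $( * )$ at $x$, there exists a constant $\phi>0$ such that for all $\beta\in[0,1]$ $$\Psi(x+\beta p)-\Psi(x)\le-\frac{\beta\lambda}{2}p^TJ(x)^TJ(x)p+\lambda\beta c(x)+\phi\beta^2\|p\|^2.$$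
   Context: $\|\cdot\|$ is the Euclidean norm. Such $x^*,\rho$ exist e.g. near a KKT point $(x^*,\lambda^* )$ with $\lambda^*>0$, $\nabla c(x^* )\ne0$ and $\nabla^2\Psi(x^* )+\lambda^*J(x^* )^TJ(x^* )$ positive definite. *)

theory Defs
  imports "HOL-Analysis.Analysis"
begin

end

theory Submission
  imports Defs
begin
lemma tangent_ineq:
  fixes Psi :: "'a::real_inner \<Rightarrow> real"
  assumes cv: "convex_on UNIV Psi"
    and d: "\<And>x. (Psi has_derivative (\<lambda>h. G x \<bullet> h)) (at x)"
  shows "G z \<bullet> (y - z) \<le> Psi y - Psi z"
proof -
  define dd where "dd = y - z"
  define h where "h t = Psi (z + t *\<^sub>R dd)" for t :: real
  have hc: "convex_on UNIV h"
  proof (rule convex_onI)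
    fix t a b :: real assume t: "0 < t" "t < 1"
    have "z + ((1 - t) *\<^sub>R a + t *\<^sub>R b) *\<^sub>R dd = (1 - t) *\<^sub>R (z + a *\<^sub>R dd) + t *\<^sub>R (z + b *\<^sub>R dd)"
      by (simp add: algebra_simps)
    then show "h ((1 - t) *\<^sub>R a + t *\<^sub>R b) \<le> (1 - t) * h a + t * h b"
      unfolding h_def using convex_onD[OF cv, of t "z + a *\<^sub>R dd" "z + b *\<^sub>R dd"] t by simp
  qed simp
  have "((\<lambda>t. z + t *\<^sub>R dd) has_derivative (\<lambda>t. t *\<^sub>R dd)) (at 0)"
    by (auto intro!: derivative_eq_intros)
  from has_derivative_compose[OF this d[of "z + 0 *\<^sub>R dd"]]
  have "(h has_derivative (\<lambda>t. G z \<bullet> (t *\<^sub>R dd))) (at 0)"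
    unfolding h_def o_def by simp
  moreover have "(\<lambda>t. G z \<bullet> (t *\<^sub>R dd)) = (*) (G z \<bullet> dd)" by (auto simp: fun_eq_iff)
  ultimately have "(h has_field_derivative (G z \<bullet> dd)) (at 0 within UNIV)"
    by (simp add: has_field_derivative_def)
  from convex_on_imp_above_tangent[OF hc _ _ _ this, of 1]
  have "G z \<bullet> dd \<le> h 1 - h 0" by simp
  then show ?thesis unfolding h_def dd_def by simp
qed
lemma main_bound:
  fixes Psi :: "real^'n \<Rightarrow> real"
    and gradPsi :: "real^'n \<Rightarrow> real^'n"
    and HPsi :: "real^'n \<Rightarrow> real^'n^'n"
  assumes convex: "convex_on UNIV Psi"
    and Psi_deriv: "\<And>x. (Psi has_derivative (\<lambda>h. gradPsi x \<bullet> h)) (at x)"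
    and gradPsi_deriv: "\<And>x. (gradPsi has_derivative (\<lambda>h. HPsi x *v h)) (at x)"
    and HPsi_cont: "continuous_on UNIV HPsi"
    and A: "gradPsi x \<bullet> p \<le> A"
  shows "\<exists>K \<ge> 0. \<forall>beta \<in> {0..1}. Psi (x + beta *\<^sub>R p) - Psi x \<le> beta * A + K * beta^2"
proof -
  define g where "g t = gradPsi (x + t *\<^sub>R p) \<bullet> p" for t :: real
  define g' where "g' t = (HPsi (x + t *\<^sub>R p) *v p) \<bullet> p" for t :: real
  have gd: "(g has_real_derivative g' t) (at t)" for t
  proof -
    have "((\<lambda>t. x + t *\<^sub>R p) has_derivative (\<lambda>t. t *\<^sub>R p)) (at t)"
      by (auto intro!: derivative_eq_intros)
    from has_derivative_compose[OF this gradPsi_deriv[of "x + t *\<^sub>R p"]]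
    have "((\<lambda>t. gradPsi (x + t *\<^sub>R p)) has_derivative (\<lambda>s. HPsi (x + t *\<^sub>R p) *v (s *\<^sub>R p))) (at t)"
      by (simp add: o_def)
    then have "(g has_derivative (\<lambda>s. (HPsi (x + t *\<^sub>R p) *v (s *\<^sub>R p)) \<bullet> p)) (at t)"
      unfolding g_def by (auto intro!: derivative_eq_intros)
    moreover have "(\<lambda>s. (HPsi (x + t *\<^sub>R p) *v (s *\<^sub>R p)) \<bullet> p) = (*) (g' t)"
      by (auto simp: fun_eq_iff g'_def matrix_vector_mult_scaleR)
    ultimately show ?thesis by (simp add: has_field_derivative_def)
  qed
  have "continuous_on {0..1} g'"
  proof -
    have c1: "continuous_on {0..1} (\<lambda>t. HPsi (x + t *\<^sub>R p))"
      by (rule continuous_on_compose2[OF HPsi_cont]) (auto intro!: continuous_intros)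
    have "continuous_on {0..1} (\<lambda>t. HPsi (x + t *\<^sub>R p) *v p)"
    proof -
      have "linear (\<lambda>M::real^'n^'n. M *v p)"
        by (rule linearI) (auto simp: matrix_vector_mult_def vec_eq_iff sum.distrib sum_distrib_left algebra_simps)
      then show ?thesis using linear_continuous_on_compose[OF c1, of "\<lambda>M. M *v p"] by simp
    qed
    then show ?thesis unfolding g'_def by (auto intro!: continuous_intros)
  qed
  then have "compact (g' ` {0..1})" by (rule compact_continuous_image) simp
  then obtain K where K: "\<And>t. t \<in> {0..1} \<Longrightarrow> norm (g' t) \<le> K"
    using compact_imp_bounded bounded_iff by (metis image_eqI)
  have K0: "K \<ge> 0" using K[of 0] by (auto intro: order_trans[OF norm_ge_zero])
  have "\<forall>beta \<in> {0..1}. Psi (x + beta *\<^sub>R p) - Psi x \<le> beta * A + K * beta^2"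
  proof
    fix beta :: real assume b: "beta \<in> {0..1}"
    show "Psi (x + beta *\<^sub>R p) - Psi x \<le> beta * A + K * beta^2"
    proof (cases "beta = 0")
      case True then show ?thesis by simp
    next
      case False
      then have bp: "0 < beta" using b by auto
      obtain z where z: "0 < z" "z < beta" "g beta - g 0 = (beta - 0) * g' z"
        using MVT2[OF bp, of g g'] gd by blast
      have "g' z \<le> K" using K[of z] z b by auto
      then have gb: "g beta \<le> g 0 + beta * K" using z bp
        by (smt (verit) mult.commute mult_left_mono)
      have "gradPsi (x + beta *\<^sub>R p) \<bullet> (x - (x + beta *\<^sub>R p)) \<le> Psi x - Psi (x + beta *\<^sub>R p)"
        by (rule tangent_ineq[OF convex Psi_deriv])
      then have "Psi (x + beta *\<^sub>R p) - Psi x \<le> beta * g beta"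
        unfolding g_def by (simp add: inner_minus_right)
      also have "\<dots> \<le> beta * (g 0 + beta * K)" using gb bp by (simp add: mult_left_mono)
      also have "\<dots> \<le> beta * A + K * beta^2"
        using A bp unfolding g_def by (simp add: algebra_simps power2_eq_square mult_left_mono)
      finally show ?thesis .
    qed
  qed
  then show ?thesis using K0 by blast
qed
theorem lemma4:
  fixes Psi :: "real^'n \<Rightarrow> real"
    and gradPsi :: "real^'n \<Rightarrow> real^'n"
    and HPsi :: "real^'n \<Rightarrow> real^'n^'n"
    and s :: "real^'n \<Rightarrow> real^'m"
    and J :: "real^'n \<Rightarrow> real^'n^'m"
    and b :: "real^'m" and sigma rho :: real
    and c :: "real^'n \<Rightarrow> real" and gradc :: "real^'n \<Rightarrow> real^'n"
    and xstar :: "real^'n"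
  assumes mn: "CARD('m) \<ge> CARD('n)"
    and convex: "convex_on UNIV Psi"
    and Psi_deriv: "\<And>x. (Psi has_derivative (\<lambda>h. gradPsi x \<bullet> h)) (at x)"
    and gradPsi_deriv: "\<And>x. (gradPsi has_derivative (\<lambda>h. HPsi x *v h)) (at x)"
    and HPsi_cont: "continuous_on UNIV HPsi"
    and s_deriv: "\<And>x. (s has_derivative (\<lambda>h. J x *v h)) (at x)"
    and J_cont: "continuous_on UNIV J"
    and sigma_pos: "sigma > 0"
    and c_def: "\<And>x. c x = (1/2) * (norm (s x - b))^2 - sigma^2 / 2"
    and gradc_def: "\<And>x. gradc x = transpose (J x) *v (s x - b)"
    and rho_pos: "rho > 0"
    and solvable: "\<forall>x\<in>ball xstar rho. \<exists>p lam. lam > 0 \<and>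
        gradPsi (x + p) + lam *\<^sub>R (gradc x + (transpose (J x) ** J x) *v p) = 0 \<and>
        c x + gradc x \<bullet> p + (1/2) * (p \<bullet> ((transpose (J x) ** J x) *v p)) = 0"
  shows "\<forall>x\<in>ball xstar rho. \<forall>p lam. lam > 0 \<and>
        gradPsi (x + p) + lam *\<^sub>R (gradc x + (transpose (J x) ** J x) *v p) = 0 \<and>
        c x + gradc x \<bullet> p + (1/2) * (p \<bullet> ((transpose (J x) ** J x) *v p)) = 0
      \<longrightarrow> (\<exists>phi > 0. \<forall>beta \<in> {0..1}.
        Psi (x + beta *\<^sub>R p) - Psi x
          \<le> - (beta * lam / 2) * (p \<bullet> ((transpose (J x) ** J x) *v p))
            + lam * beta * c x + phi * beta^2 * (norm p)^2)"
proof (intro ballI allI impI)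
  fix x p lam
  assume hx: "x \<in> ball xstar rho"
  assume H: "lam > 0 \<and>
        gradPsi (x + p) + lam *\<^sub>R (gradc x + (transpose (J x) ** J x) *v p) = 0 \<and>
        c x + gradc x \<bullet> p + (1/2) * (p \<bullet> ((transpose (J x) ** J x) *v p)) = 0"
  define M where "M = transpose (J x) ** J x"
  define q where "q = p \<bullet> (M *v p)"
  have lam: "lam > 0" using H by simp
  have e1: "gradPsi (x + p) = - (lam *\<^sub>R (gradc x + M *v p))"
    using H unfolding M_def by (simp add: eq_neg_iff_add_eq_0)
  have e2: "gradc x \<bullet> p = - c x - q / 2" using H unfolding M_def q_def by simp
  have t1: "gradPsi x \<bullet> ((x + p) - x) \<le> Psi (x + p) - Psi x"
    by (rule tangent_ineq[OF convex Psi_deriv])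
  have t2: "gradPsi (x + p) \<bullet> (x - (x + p)) \<le> Psi x - Psi (x + p)"
    by (rule tangent_ineq[OF convex Psi_deriv])
  have "gradPsi (x + p) \<bullet> p = - lam * (gradc x \<bullet> p + q)"
    unfolding e1 q_def by (simp add: inner_add_left inner_add_right inner_commute)
  then have "gradPsi (x + p) \<bullet> p = - (lam / 2) * q + lam * c x"
    using e2 by (simp add: algebra_simps)
  moreover have "gradPsi x \<bullet> p \<le> gradPsi (x + p) \<bullet> p"
    using t1 t2 by (simp add: inner_minus_right)
  ultimately have A: "gradPsi x \<bullet> p \<le> - (lam / 2) * q + lam * c x" by simp
  obtain K where K0: "K \<ge> 0" and K: "\<forall>beta \<in> {0..1}. Psi (x + beta *\<^sub>R p) - Psi x
      \<le> beta * (- (lam / 2) * q + lam * c x) + K * beta^2"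
    using main_bound[OF convex Psi_deriv gradPsi_deriv HPsi_cont A] by blast
  show "\<exists>phi > 0. \<forall>beta \<in> {0..1}.
        Psi (x + beta *\<^sub>R p) - Psi x
          \<le> - (beta * lam / 2) * (p \<bullet> ((transpose (J x) ** J x) *v p))
            + lam * beta * c x + phi * beta^2 * (norm p)^2"
  proof (cases "p = 0")
    case True
    then have "c x = 0" using e2 unfolding q_def by simp
    then show ?thesis using True by (intro exI[of _ 1]) simp
  next
    case False
    then have np: "(norm p)^2 > 0" by simp
    define phi where "phi = (K + 1) / (norm p)^2"
    have phi: "phi > 0" unfolding phi_def using K0 np by simp
    have pe: "phi * beta^2 * (norm p)^2 = (K + 1) * beta^2" for beta
      unfolding phi_def using np by simp
    show ?thesis
    proof (intro exI[of _ phi] conjI phi ballI)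
      fix beta :: real assume b: "beta \<in> {0..1}"
      have "Psi (x + beta *\<^sub>R p) - Psi x \<le> beta * (- (lam / 2) * q + lam * c x) + K * beta^2"
        using K b by blast
      also have "\<dots> \<le> - (beta * lam / 2) * q + lam * beta * c x + (K + 1) * beta^2"
        by (simp add: algebra_simps)
      finally show "Psi (x + beta *\<^sub>R p) - Psi x
          \<le> - (beta * lam / 2) * (p \<bullet> ((transpose (J x) ** J x) *v p))
            + lam * beta * c x + phi * beta^2 * (norm p)^2"
        unfolding pe q_def M_def .
    qed
  qed
qed

end
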